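(* Let $n\ge 2$ and $\gamma_1,\dots,\gamma_n>0$. Let $A\in\mathbb{R}^{n\times n}$ be the matrix with $A_{ii}=-1$ for $i=1,\dots,n$, $A_{1n}=-\gamma_1$, $A_{i,i-1}=\gamma_i$ for $i=2,\dots,n$, and all other entries equal to $0$, i.e. $$A=\begin{bmatrix} -1 & 0 & \cdots & 0 & -\gamma_1\\ \gamma_2 & -1 & & & 0\\ 0&\gamma_3&-1&&\vdots\\ \vdots&&\ddots&\ddots&0\\ 0&\cdots&0&\gamma_n&-1\end{bmatrix}.$$ Then there exists a diagonal matrix $D$ with positive diagonal entries such that $DA+A^TD$ is negative definite if and only if $$\cos(\pi/n)\,(\gamma_1\gamma_2\cdots\gamma_n)^{1/n}<1,$$ which for $n\ge 3$ is equivalent to $\gamma_1\cdots\gamma_n<\sec(\pi/n)^n$ (and for $n=2$ holds for all positive $\gamma_1,\gamma_2$).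
   Context: A matrix $A$ is called diagonally stable if $DA+A^TD<0$ (negative definite) for some diagonal $D>0$. *)

theory Defs
  imports Complex_Main "Jordan_Normal_Form.Matrix"
begin

definition negative_definite :: "real mat \<Rightarrow> bool" where
  "negative_definite M \<longleftrightarrow> square_mat M \<and>
     (\<forall>x \<in> carrier_vec (dim_row M). x \<noteq> 0\<^sub>v (dim_row M) \<longrightarrow> x \<bullet> (M *\<^sub>v x) < 0)"

definition diagonally_stable :: "real mat \<Rightarrow> bool" where
  "diagonally_stable A \<longleftrightarrow> (\<exists>D \<in> carrier_mat (dim_row A) (dim_row A).
     diagonal_mat D \<and> (\<forall>i < dim_row A. D $$ (i,i) > 0) \<and>
     negative_definite (D * A + transpose_mat A * D))"

text \<open>The cyclic matrix of the statement, 0-based indices: gamma 0 is gamma_1.\<close>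
definition cyclic_mat :: "nat \<Rightarrow> (nat \<Rightarrow> real) \<Rightarrow> real mat" where
  "cyclic_mat n \<gamma> = mat n n (\<lambda>(i,j).
     if i = j then -1
     else if i = 0 \<and> j = n - 1 then - \<gamma> 0
     else if 0 < i \<and> j = i - 1 then \<gamma> i
     else 0)"

end

theory Submission
  imports Defs
begin


lemma trig1: "sin (x + t) + sin (x - t) = 2 * cos t * sin (x::real)"
  by (simp add: sin_add sin_diff)

lemma trig2: "(sin x)\<^sup>2 - sin (x - t) * sin (x + t) = (sin (t::real))\<^sup>2"
proof -
  have "sin (x - t) * sin (x + t) = (sin x)^2 * (cos t)^2 - (cos x)^2 * (sin t)^2"
    by (simp add: sin_add sin_diff power2_eq_square algebra_simps)
  moreover have "(cos x)^2 = 1 - (sin x)^2" "(cos t)^2 = 1 - (sin t)^2"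
    by (simp_all add: cos_squared_eq)
  ultimately show ?thesis by (simp add: algebra_simps)
qed

definition Fq :: "real \<Rightarrow> (nat \<Rightarrow> real) \<Rightarrow> real \<Rightarrow> nat \<Rightarrow> real" where
  "Fq th y z m = cos th * (\<Sum>j<m. (y j)\<^sup>2)
     + sin (real m * th) / (2 * sin ((real m + 1) * th)) * ((y m)\<^sup>2 + z\<^sup>2)
     - (\<Sum>k<m. y k * y (Suc k)) + y 0 * z - sin th / sin ((real m + 1) * th) * y m * z"

lemma Fq_step:
  assumes b: "sin ((real m + 1) * th) > 0" and e: "sin ((real m + 2) * th) > 0"
  shows "Fq th y z (Suc m) = Fq th y z m +
     (sin ((real m + 2) * th) * y m - sin ((real m + 1) * th) * y (Suc m) + sin th * z)\<^sup>2
       / (2 * sin ((real m + 1) * th) * sin ((real m + 2) * th))"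
proof -
  define a where "a = sin (real m * th)"
  define bb where "bb = sin ((real m + 1) * th)"
  define ee where "ee = sin ((real m + 2) * th)"
  define s where "s = sin th"
  define c where "c = cos th"
  have h1: "ee + a = 2 * c * bb"
    using trig1[of "(real m + 1) * th" th] unfolding a_def bb_def ee_def c_def
    by (simp add: algebra_simps)
  have h2: "bb^2 - a * ee = s^2"
    using trig2[of "(real m + 1) * th" th] unfolding a_def bb_def ee_def s_def
    by (simp add: algebra_simps)
  have bp: "bb > 0" "ee > 0" using b e by (auto simp: bb_def ee_def)
  have a: "a = 2 * c * bb - ee" using h1 by simp
  have s2: "s^2 = bb^2 - (2 * c * bb - ee) * ee" using h2 a by simp
  have eq: "Fq th y z (Suc m) = c * (\<Sum>j<m. (y j)\<^sup>2) + c * (y m)^2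
     + bb / (2 * ee) * ((y (Suc m))\<^sup>2 + z\<^sup>2)
     - (\<Sum>k<m. y k * y (Suc k)) - y m * y (Suc m) + y 0 * z - s / ee * y (Suc m) * z"
    unfolding Fq_def bb_def ee_def c_def s_def by (simp add: algebra_simps)
  have eq2: "Fq th y z m = c * (\<Sum>j<m. (y j)\<^sup>2)
     + a / (2 * bb) * ((y m)\<^sup>2 + z\<^sup>2)
     - (\<Sum>k<m. y k * y (Suc k)) + y 0 * z - s / bb * y m * z"
    unfolding Fq_def a_def bb_def s_def c_def by simp
  show ?thesis
    unfolding eq eq2 a  bb_def[symmetric] ee_def[symmetric] s_def[symmetric]
    using bp s2
    apply (simp add: field_simps power2_eq_square)
    subgoal premises p
      using arg_cong[OF p(3), of "\<lambda>t. 4*bb*bb*ee*ee*z*z*t"] by (simp add: algebra_simps)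
    done
qed

lemma Fq_nonneg:
  assumes "\<forall>j. 1 \<le> j \<and> j \<le> m + 1 \<longrightarrow> sin (real j * th) > 0"
  shows "Fq th y z m \<ge> 0"
  using assms
proof (induction m)
  case 0
  then have "sin th > 0" by (metis le_refl of_nat_1 mult_1 add_0)
  then show ?case by (simp add: Fq_def)
next
  case (Suc m)
  have b: "sin ((real m + 1) * th) > 0" using Suc.prems[rule_format, of "m+1"] by (simp add: add.commute)
  have e: "sin ((real m + 2) * th) > 0" using Suc.prems[rule_format, of "m+2"] by (simp add: add.commute)
  have "Fq th y z m \<ge> 0" using Suc by simp
  moreover have "(sin ((real m + 2) * th) * y m - sin ((real m + 1) * th) * y (Suc m) + sin th * z)\<^sup>2
       / (2 * sin ((real m + 1) * th) * sin ((real m + 2) * th)) \<ge> 0"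
    using b e by simp
  ultimately show ?case using Fq_step[OF b e, of y z] by simp
qed

lemma cyc_ineq:
  fixes y :: "nat \<Rightarrow> real"
  assumes n: "n \<ge> 2"
  shows "(\<Sum>k<n-1. y k * y (Suc k)) - y 0 * y (n-1) \<le> cos (pi / real n) * (\<Sum>k<n. (y k)\<^sup>2)"
proof -
  obtain m where nm: "n = Suc (Suc m)" using n by (metis add_2_eq_Suc le_Suc_ex)
  define th where "th = pi / real n"
  have thpos: "th > 0" using n by (simp add: th_def)
  have pos: "\<forall>j. 1 \<le> j \<and> j \<le> m + 1 \<longrightarrow> sin (real j * th) > 0"
  proof (intro allI impI)
    fix j :: nat assume j: "1 \<le> j \<and> j \<le> m + 1"
    have "real j < real n" using j nm by simp
    then have "real j * th < real n * th" using thpos by simp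
    then have "real j * th < pi" using n by (simp add: th_def)
    moreover have "real j * th > 0" using j thpos by simp
    ultimately show "sin (real j * th) > 0" by (simp add: sin_gt_zero)
  qed
  have nth: "real n * th = pi" using n by (simp add: th_def)
  have s1: "sin ((real m + 1) * th) = sin th"
  proof -
    have "(real m + 1) * th = pi - th" using nth nm by (simp add: algebra_simps)
    then show ?thesis by simp
  qed
  have s0: "sin (real m * th) = 2 * sin th * cos th"
  proof -
    have "real m * th = pi - 2 * th" using nth nm by (simp add: algebra_simps)
    then show ?thesis by (simp add: sin_double)
  qed
  have sp: "sin th > 0" using pos[rule_format, of 1] by simp
  have "Fq th y (y (Suc m)) m \<ge> 0" by (rule Fq_nonneg[OF pos])
  then have "0 \<le> cos th * (\<Sum>j<m. (y j)\<^sup>2) + cos th * ((y m)\<^sup>2 + (y (Suc m))\<^sup>2)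
     - (\<Sum>k<m. y k * y (Suc k)) + y 0 * y (Suc m) - y m * y (Suc m)"
    unfolding Fq_def s0 s1 using sp by simp
  moreover have "(\<Sum>k<n. (y k)\<^sup>2) = (\<Sum>j<m. (y j)\<^sup>2) + (y m)\<^sup>2 + (y (Suc m))\<^sup>2"
    using nm by simp
  moreover have "(\<Sum>k<n-1. y k * y (Suc k)) = (\<Sum>k<m. y k * y (Suc k)) + y m * y (Suc m)"
    using nm by simp
  ultimately show ?thesis using nm by (simp add: th_def algebra_simps)
qed



definition rowsum :: "nat \<Rightarrow> (nat \<Rightarrow> real) \<Rightarrow> (nat \<Rightarrow> real) \<Rightarrow> nat \<Rightarrow> real" where
  "rowsum n \<gamma> x i = - x i + (if i = 0 then - \<gamma> 0 * x (n-1) else \<gamma> i * x (i-1))"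

definition qf :: "nat \<Rightarrow> (nat \<Rightarrow> real) \<Rightarrow> (nat \<Rightarrow> real) \<Rightarrow> (nat \<Rightarrow> real) \<Rightarrow> real" where
  "qf n \<gamma> d x = (\<Sum>i<n. d i * x i * rowsum n \<gamma> x i)"

lemma cyc_entry:
  assumes "n \<ge> 2" "i < n" "j < n"
  shows "cyclic_mat n \<gamma> $$ (i,j) = (if j = i then -1 else 0) + (if j = n - 1 \<and> i = 0 then - \<gamma> 0 else 0)
      + (if j = i - 1 \<and> 0 < i then \<gamma> i else 0)"
  using assms by (auto simp: cyclic_mat_def)

lemma cyc_row:
  assumes "n \<ge> 2" "i < n"
  shows "(\<Sum>j<n. cyclic_mat n \<gamma> $$ (i,j) * x j) = rowsum n \<gamma> x i"
proof -
  have "(\<Sum>j<n. cyclic_mat n \<gamma> $$ (i,j) * x j) =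
     (\<Sum>j<n. (if j = i then - x j else 0) + (if j = n - 1 then (if i = 0 then - \<gamma> 0 * x j else 0) else 0)
      + (if j = i - 1 then (if 0 < i then \<gamma> i * x j else 0) else 0))"
    by (rule sum.cong) (auto simp: cyc_entry[OF assms] algebra_simps)
  also have "\<dots> = rowsum n \<gamma> x i"
    using assms by (simp add: sum.distrib rowsum_def)
  finally show ?thesis .
qed

lemma dim_cyc[simp]: "dim_row (cyclic_mat n \<gamma>) = n" "dim_col (cyclic_mat n \<gamma>) = n"
  by (auto simp: cyclic_mat_def)

lemma quad_form:
  assumes n: "n \<ge> 2" and D: "D \<in> carrier_mat n n" and dg: "diagonal_mat D"
    and v: "v \<in> carrier_vec n"
  shows "v \<bullet> ((D * cyclic_mat n \<gamma> + transpose_mat (cyclic_mat n \<gamma>) * D) *\<^sub>v v)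
     = 2 * qf n \<gamma> (\<lambda>i. D $$ (i,i)) (\<lambda>i. v $ i)"
proof -
  let ?A = "cyclic_mat n \<gamma>"
  let ?M = "D * ?A + transpose_mat ?A * D"
  define d where "d = (\<lambda>i. D $$ (i,i))"
  have Doff: "D $$ (i,j) = 0" if "i < n" "j < n" "i \<noteq> j" for i j
    using dg D that unfolding diagonal_mat_def by auto
  have DA: "(D * ?A) $$ (i,j) = d i * ?A $$ (i,j)" if "i < n" "j < n" for i j
  proof -
    have "(D * ?A) $$ (i,j) = (\<Sum>k\<in>{0..<n}. D $$ (i,k) * ?A $$ (k,j))"
      using that D by (simp add: scalar_prod_def)
    also have "\<dots> = (\<Sum>k\<in>{0..<n}. if k = i then d i * ?A $$ (k,j) else 0)"
      by (rule sum.cong) (auto simp: Doff that d_def)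
    also have "\<dots> = d i * ?A $$ (i,j)" using that by simp
    finally show ?thesis .
  qed
  have AD: "(transpose_mat ?A * D) $$ (i,j) = ?A $$ (j,i) * d j" if "i < n" "j < n" for i j
  proof -
    have "(transpose_mat ?A * D) $$ (i,j) = (\<Sum>k\<in>{0..<n}. ?A $$ (k,i) * D $$ (k,j))"
      using that D by (simp add: scalar_prod_def)
    also have "\<dots> = (\<Sum>k\<in>{0..<n}. if k = j then ?A $$ (j,i) * d j else 0)"
      by (rule sum.cong) (auto simp: Doff that d_def)
    also have "\<dots> = ?A $$ (j,i) * d j" using that by simp
    finally show ?thesis .
  qed
  have Mij: "?M $$ (i,j) = d i * ?A $$ (i,j) + ?A $$ (j,i) * d j" if "i < n" "j < n" for i j
    using that D DA AD by simp
  have "v \<bullet> (?M *\<^sub>v v) = (\<Sum>i<n. v $ i * (\<Sum>j<n. ?M $$ (i,j) * v $ j))"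
    using D v by (simp add: scalar_prod_def atLeast0LessThan)
  also have "\<dots> = (\<Sum>i<n. \<Sum>j<n. d i * ?A $$ (i,j) * v $ i * v $ j)
      + (\<Sum>i<n. \<Sum>j<n. d j * ?A $$ (j,i) * v $ i * v $ j)"
    by (simp add: Mij sum_distrib_left sum.distrib[symmetric] algebra_simps)
  also have "(\<Sum>i<n. \<Sum>j<n. d j * ?A $$ (j,i) * v $ i * v $ j)
      = (\<Sum>i<n. \<Sum>j<n. d i * ?A $$ (i,j) * v $ i * v $ j)"
    by (subst sum.swap) (simp add: algebra_simps)
  also have "(\<Sum>i<n. \<Sum>j<n. d i * ?A $$ (i,j) * v $ i * v $ j) = qf n \<gamma> d (\<lambda>i. v $ i)"
  proof -
    have "(\<Sum>i<n. \<Sum>j<n. d i * ?A $$ (i,j) * v $ i * v $ j)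
        = (\<Sum>i<n. d i * v $ i * (\<Sum>j<n. ?A $$ (i,j) * v $ j))"
      by (simp add: sum_distrib_left algebra_simps)
    also have "\<dots> = qf n \<gamma> d (\<lambda>i. v $ i)"
      unfolding qf_def by (rule sum.cong) (simp_all add: cyc_row[OF n])
    finally show ?thesis .
  qed
  finally show ?thesis by (simp add: d_def)
qed


definition rho :: "(nat \<Rightarrow> real) \<Rightarrow> real \<Rightarrow> nat \<Rightarrow> real" where
  "rho \<gamma> G i = (\<Prod>j<i. \<gamma> (Suc j)) / G ^ i"

lemma qf_cong:
  assumes "n \<ge> 1" "\<forall>i<n. x i = x' i"
  shows "qf n \<gamma> d x = qf n \<gamma> d x'"
  unfolding qf_def rowsum_def using assms by (intro sum.cong) auto

lemma sum_shift_cyc: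
  fixes y :: "nat \<Rightarrow> real"
  assumes "n \<ge> 1"
  shows "(\<Sum>i<n. f i * (if i = 0 then - y 0 * y (n-1) else y i * y (i-1)))
     = - f 0 * y 0 * y (n-1) + (\<Sum>k<n-1. f (Suc k) * y k * y (Suc k))"
proof -
  obtain m where m: "n = Suc m" using assms by (cases n) auto
  have "(\<Sum>i<n. f i * (if i = 0 then - y 0 * y (n-1) else y i * y (i-1)))
     = f 0 * (- y 0 * y m) + (\<Sum>k<m. f (Suc k) * (y (Suc k) * y k))"
    unfolding m by (simp only: sum.lessThan_Suc_shift) simp
  then show ?thesis using m by (simp add: algebra_simps)
qed

lemma per_index:
  fixes \<gamma> :: "nat \<Rightarrow> real"
  assumes n: "n \<ge> 2" and Gp: "G > 0" and i: "i < n"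
    and r0: "rho \<gamma> G 0 = 1"
    and rs: "\<And>k. rho \<gamma> G (Suc k) * G = rho \<gamma> G k * \<gamma> (Suc k)"
    and rl: "\<gamma> 0 * rho \<gamma> G (n-1) = G"
  shows "d i * (rho \<gamma> G i * y i) * rowsum n \<gamma> (\<lambda>i. rho \<gamma> G i * y i) i
     = d i * (rho \<gamma> G i)\<^sup>2 * (- (y i)\<^sup>2 + G * (if i = 0 then - y 0 * y (n-1) else y i * y (i-1)))"
proof (cases i)
  case 0
  have "\<gamma> 0 * (rho \<gamma> G (n-1) * y (n-1)) = G * y (n-1)" using rl by (simp add: mult.assoc[symmetric])
  then have R: "rowsum n \<gamma> (\<lambda>i. rho \<gamma> G i * y i) 0 = - y 0 - G * y (n-1)"
    using r0 by (simp add: rowsum_def)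
  show ?thesis unfolding 0 R r0 by (simp add: power2_eq_square algebra_simps)
next
  case (Suc k)
  have "\<gamma> (Suc k) * (rho \<gamma> G k * y k) = rho \<gamma> G (Suc k) * G * y k" using rs[of k] by simp
  then have R: "rowsum n \<gamma> (\<lambda>i. rho \<gamma> G i * y i) (Suc k) = - (rho \<gamma> G (Suc k) * y (Suc k)) + rho \<gamma> G (Suc k) * G * y k"
    by (simp add: rowsum_def)
  show ?thesis unfolding Suc R by (simp add: power2_eq_square algebra_simps)
qed

lemma qf_subst:
  fixes \<gamma> :: "nat \<Rightarrow> real"
  assumes n: "n \<ge> 2" and Gp: "G > 0"
    and r0: "rho \<gamma> G 0 = 1"
    and rs: "\<And>k. rho \<gamma> G (Suc k) * G = rho \<gamma> G k * \<gamma> (Suc k)"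
    and rl: "\<gamma> 0 * rho \<gamma> G (n-1) = G"
  shows "qf n \<gamma> d (\<lambda>i. rho \<gamma> G i * y i)
     = (\<Sum>i<n. d i * (rho \<gamma> G i)\<^sup>2 * (- (y i)\<^sup>2 + G * (if i = 0 then - y 0 * y (n-1) else y i * y (i-1))))"
  unfolding qf_def by (rule sum.cong) (simp_all add: per_index[OF n Gp _ r0 rs rl])

theorem theorem1:
  fixes n :: nat and \<gamma> :: "nat \<Rightarrow> real"
  assumes "n \<ge> 2" and "\<forall>i < n. \<gamma> i > 0"
  shows "diagonally_stable (cyclic_mat n \<gamma>) \<longleftrightarrow>
           cos (pi / real n) * root n (\<Prod>i<n. \<gamma> i) < 1"
proof -
  note n = assms(1)
  have gp: "\<And>i. i < n \<Longrightarrow> \<gamma> i > 0" using assms(2) by auto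
  define P where "P = (\<Prod>i<n. \<gamma> i)"
  define G where "G = root n P"
  define c where "c = cos (pi / real n)"
  define th where "th = pi / real n"
  have Pp: "P > 0" unfolding P_def using gp by (intro prod_pos) auto
  have Gp: "G > 0" unfolding G_def using Pp n by (intro real_root_gt_zero) auto
  have Gn: "G ^ n = P" unfolding G_def using Pp n by (intro real_root_pow_pos) auto
  obtain m where m: "n = Suc m" using n by (cases n) auto
  let ?r = "rho \<gamma> G"
  have r0: "?r 0 = 1" by (simp add: rho_def)
  have rs: "?r (Suc k) * G = ?r k * \<gamma> (Suc k)" for k
    using Gp by (simp add: rho_def field_simps)
  have rl: "\<gamma> 0 * ?r (n-1) = G"
  proof -
    have "\<gamma> 0 * ?r (n-1) = (\<Prod>j<Suc m. \<gamma> j) / G ^ m"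
      unfolding m rho_def by (simp add: prod.lessThan_Suc_shift del: prod.lessThan_Suc)
    also have "\<dots> = G ^ Suc m / G ^ m" using Gn m P_def by simp
    also have "\<dots> = G" using Gp by simp
    finally show ?thesis .
  qed
  have rpos: "?r i > 0" if "i < n" for i
    unfolding rho_def using Gp gp that by (intro divide_pos_pos prod_pos) auto
  have QS: "qf n \<gamma> d (\<lambda>i. ?r i * y i)
     = (\<Sum>i<n. d i * (?r i)\<^sup>2 * (- (y i)\<^sup>2 + G * (if i = 0 then - y 0 * y (n-1) else y i * y (i-1))))"
    for d y by (rule qf_subst[OF n Gp r0 rs rl])
  show ?thesis
  proof
    assume "diagonally_stable (cyclic_mat n \<gamma>)"
    then obtain D where D: "D \<in> carrier_mat n n" and dg: "diagonal_mat D"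
      and dp: "\<forall>i<n. D $$ (i,i) > 0"
      and nd: "negative_definite (D * cyclic_mat n \<gamma> + transpose_mat (cyclic_mat n \<gamma>) * D)"
      unfolding diagonally_stable_def by auto
    define d where "d = (\<lambda>i. D $$ (i,i))"
    have ndq: "qf n \<gamma> d (\<lambda>i. v $ i) < 0" if "v \<in> carrier_vec n" "v \<noteq> 0\<^sub>v n" for v
    proof -
      have "v \<bullet> ((D * cyclic_mat n \<gamma> + transpose_mat (cyclic_mat n \<gamma>) * D) *\<^sub>v v) < 0"
        using nd that D unfolding negative_definite_def by auto
      then show ?thesis using quad_form[OF n D dg that(1)] by (simp add: d_def)
    qed
    show "cos (pi / real n) * root n (\<Prod>i<n. \<gamma> i) < 1"
    proof (rule ccontr)
      assume "\<not> cos (pi / real n) * root n (\<Prod>i<n. \<gamma> i) < 1"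
      then have cG: "c * G \<ge> 1" by (simp add: c_def G_def P_def)
      define a where "a = (\<lambda>i::nat. cos (real i * th))"
      define b where "b = (\<lambda>i::nat. sin (real i * th))"
      define va where "va = vec n (\<lambda>i. ?r i * a i)"
      define vb where "vb = vec n (\<lambda>i. ?r i * b i)"
      have qa: "qf n \<gamma> d (\<lambda>i. ?r i * a i) < 0"
      proof -
        have "va \<noteq> 0\<^sub>v n"
        proof
          assume "va = 0\<^sub>v n"
          then have "va $ 0 = 0" using n by simp
          then show False using n r0 by (simp add: va_def a_def)
        qed
        then have "qf n \<gamma> d (\<lambda>i. va $ i) < 0" by (intro ndq) (simp_all add: va_def)
        moreover have "qf n \<gamma> d (\<lambda>i. va $ i) = qf n \<gamma> d (\<lambda>i. ?r i * a i)"
          using n by (intro qf_cong) (auto simp: va_def)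
        ultimately show ?thesis by simp
      qed
      have qb: "qf n \<gamma> d (\<lambda>i. ?r i * b i) \<le> 0"
      proof (cases "vb = 0\<^sub>v n")
        case True
        then have z: "\<forall>i<n. ?r i * b i = 0"
          by (metis index_vec index_zero_vec(1) vb_def)
        have "qf n \<gamma> d (\<lambda>i. ?r i * b i) = qf n \<gamma> d (\<lambda>i. 0)"
          using n z by (intro qf_cong) auto
        then show ?thesis by (simp add: qf_def)
      next
        case False
        then have "qf n \<gamma> d (\<lambda>i. vb $ i) < 0" by (intro ndq) (simp_all add: vb_def)
        moreover have "qf n \<gamma> d (\<lambda>i. vb $ i) = qf n \<gamma> d (\<lambda>i. ?r i * b i)"
          using n by (intro qf_cong) (auto simp: vb_def)
        ultimately show ?thesis by simp
      qed
      have cl: "cos (real (n-1) * th) = - cos th"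
      proof -
        have "real n * th = pi" using n by (simp add: th_def)
        moreover have "real (n-1) * th = real n * th - th" using n by (simp add: of_nat_diff algebra_simps)
        ultimately have "real (n-1) * th = pi - th" by simp
        then show ?thesis by simp
      qed
      have "qf n \<gamma> d (\<lambda>i. ?r i * a i) + qf n \<gamma> d (\<lambda>i. ?r i * b i)
          = (\<Sum>i<n. d i * (?r i)\<^sup>2 * (- (a i)\<^sup>2 + G * (if i = 0 then - a 0 * a (n-1) else a i * a (i-1))) +
              d i * (?r i)\<^sup>2 * (- (b i)\<^sup>2 + G * (if i = 0 then - b 0 * b (n-1) else b i * b (i-1))))"
        by (simp only: QS sum.distrib)
      also have "\<dots> = (\<Sum>i<n. d i * (?r i)\<^sup>2 * (G * c - 1))"
      proof (rule sum.cong)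
        fix i assume "i \<in> {..<n}"
        show "d i * (?r i)\<^sup>2 * (- (a i)\<^sup>2 + G * (if i = 0 then - a 0 * a (n-1) else a i * a (i-1))) +
              d i * (?r i)\<^sup>2 * (- (b i)\<^sup>2 + G * (if i = 0 then - b 0 * b (n-1) else b i * b (i-1)))
              = d i * (?r i)\<^sup>2 * (G * c - 1)"
        proof (cases i)
          case 0
          then show ?thesis using cl by (simp add: a_def b_def c_def th_def algebra_simps)
        next
          case (Suc k)
          have "a i * a (i-1) + b i * b (i-1) = cos th"
            using cos_diff[of "real i * th" "real k * th"] Suc
            by (simp add: a_def b_def algebra_simps)
          then have e1: "G * (a i * a (i-1)) + G * (b i * b (i-1)) = G * c"
            by (simp add: c_def th_def distrib_left[symmetric])
          moreover have "(a i)\<^sup>2 + (b i)\<^sup>2 = 1" by (simp add: a_def b_def)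
          ultimately have "- (a i)\<^sup>2 + G * (a i * a (i-1)) + (- (b i)\<^sup>2 + G * (b i * b (i-1))) = G * c - 1"
            by linarith
          then have "(- (a i)\<^sup>2 + G * (if i = 0 then - a 0 * a (n-1) else a i * a (i-1))) +
              (- (b i)\<^sup>2 + G * (if i = 0 then - b 0 * b (n-1) else b i * b (i-1))) = G * c - 1"
            using Suc by simp
          then show ?thesis by (metis distrib_left)
        qed
      qed simp
      moreover have "(\<Sum>i<n. d i * (?r i)\<^sup>2 * (G * c - 1)) \<ge> 0"
        using cG dp by (intro sum_nonneg mult_nonneg_nonneg) (auto simp: d_def less_imp_le mult.commute)
      ultimately show False using qa qb by simp
    qed
  next
    assume "cos (pi / real n) * root n (\<Prod>i<n. \<gamma> i) < 1"
    then have cG: "c * G < 1" by (simp add: c_def G_def P_def)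
    define D where "D = mat n n (\<lambda>(i,j). if i = j then 1 / (?r i)\<^sup>2 else 0)"
    have Dc: "D \<in> carrier_mat n n" by (simp add: D_def)
    have Ddg: "diagonal_mat D" by (simp add: D_def diagonal_mat_def)
    have Dp: "\<forall>i<n. D $$ (i,i) > 0" using rpos by (simp add: D_def less_imp_neq[symmetric])
    have "negative_definite (D * cyclic_mat n \<gamma> + transpose_mat (cyclic_mat n \<gamma>) * D)"
      unfolding negative_definite_def
    proof (intro conjI ballI impI)
      show "square_mat (D * cyclic_mat n \<gamma> + transpose_mat (cyclic_mat n \<gamma>) * D)"
        using Dc by simp
      fix x :: "real vec" assume xc: "x \<in> carrier_vec (dim_row (D * cyclic_mat n \<gamma> + transpose_mat (cyclic_mat n \<gamma>) * D))"
        and xn: "x \<noteq> 0\<^sub>v (dim_row (D * cyclic_mat n \<gamma> + transpose_mat (cyclic_mat n \<gamma>) * D))"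
      have xc': "x \<in> carrier_vec n" using xc Dc by simp
      have xn': "x \<noteq> 0\<^sub>v n" using xn Dc by simp
      obtain i0 where i0: "i0 < n" "x $ i0 \<noteq> 0"
        using xn' xc' by (metis carrier_vecD eq_vecI index_zero_vec)
      define y where "y = (\<lambda>i. x $ i / ?r i)"
      have dd: "(\<lambda>i. D $$ (i,i)) i * (?r i)\<^sup>2 = 1" if "i < n" for i
        using rpos[OF that] that by (simp add: D_def)
      have "qf n \<gamma> (\<lambda>i. D $$ (i,i)) (\<lambda>i. x $ i) = qf n \<gamma> (\<lambda>i. D $$ (i,i)) (\<lambda>i. ?r i * y i)"
        using n rpos by (intro qf_cong) (auto simp: y_def less_imp_neq[symmetric])
      also have "\<dots> = (\<Sum>i<n. - (y i)\<^sup>2 + G * (if i = 0 then - y 0 * y (n-1) else y i * y (i-1)))"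
        unfolding QS by (rule sum.cong) (simp_all add: dd)
      also have "\<dots> = - (\<Sum>i<n. (y i)\<^sup>2) + G * ((\<Sum>k<n-1. y k * y (Suc k)) - y 0 * y (n-1))"
      proof -
        have S: "(\<Sum>i<n. (if i = 0 then - y 0 * y (n-1) else y i * y (i-1)))
            = (\<Sum>k<n-1. y k * y (Suc k)) - y 0 * y (n-1)"
          using sum_shift_cyc[of n "\<lambda>_. 1" y] n by simp
        have "(\<Sum>i<n. - (y i)\<^sup>2 + G * (if i = 0 then - y 0 * y (n-1) else y i * y (i-1)))
           = - (\<Sum>i<n. (y i)\<^sup>2) + G * (\<Sum>i<n. (if i = 0 then - y 0 * y (n-1) else y i * y (i-1)))"
          by (simp add: sum.distrib sum_negf sum_distrib_left sum_subtractf)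
        then show ?thesis unfolding S .
      qed
      also have "\<dots> \<le> - (\<Sum>i<n. (y i)\<^sup>2) + G * (c * (\<Sum>i<n. (y i)\<^sup>2))"
        using cyc_ineq[OF n, of y] Gp unfolding c_def by (intro add_left_mono mult_left_mono) auto
      also have "\<dots> = (c * G - 1) * (\<Sum>i<n. (y i)\<^sup>2)" by (simp add: algebra_simps)
      also have "\<dots> < 0"
      proof -
        have "(\<Sum>i<n. (y i)\<^sup>2) > 0"
          using i0 rpos[OF i0(1)] by (intro sum_pos2[of _ i0]) (auto simp: y_def)
        then show ?thesis using cG by (simp add: mult_neg_pos)
      qed
      finally have "qf n \<gamma> (\<lambda>i. D $$ (i,i)) (\<lambda>i. x $ i) < 0" .
      then show "x \<bullet> ((D * cyclic_mat n \<gamma> + transpose_mat (cyclic_mat n \<gamma>) * D) *\<^sub>v x) < 0"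
        using quad_form[OF n Dc Ddg xc'] by simp
    qed
    then show "diagonally_stable (cyclic_mat n \<gamma>)"
      unfolding diagonally_stable_def using Dc Ddg Dp by auto
  qed
qed

end
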